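(* Let $\mathcal{G}=(\mathfrak{g},[\cdot,\ldots,\cdot],\varepsilon,\alpha)$ be a multiplicative $n$-Hom-Lie color algebra. For each integer $p\geq 1$, the $p$th derived algebra $\mathcal{G}^p=(\mathfrak{g},[\cdot,\ldots,\cdot]^p,\varepsilon,\alpha^{2p})$, where $[\cdot,\ldots,\cdot]^p=\alpha^{2p-1}\circ[\cdot,\ldots,\cdot]$, is an $n$-Hom-Lie color algebra (and $\mathcal{G}^0:=\mathcal{G}$).
   Context: $\mathbb{K}$ is a field of characteristic zero and $\Gamma$ an abelian group. A bicharacter is a map $\varepsilon:\Gamma\times\Gamma\to\mathbb{K}\setminus\{0\}$ with $\varepsilon(a,b)\varepsilon(b,a)=1$, $\varepsilon(a,b+c)=\varepsilon(a,b)\varepsilon(a,c)$, $\varepsilon(a+b,c)=\varepsilon(a,c)\varepsilon(b,c)$. For homogeneous $x,y$, $\varepsilon(x,y)=\varepsilon(|x|,|y|)$ and $\varepsilon(x,y_1+\dots+y_k)=\varepsilon(|x|,|y_1|+\dots+|y_k|)$ ($=1$ for an empty sum). An $n$-Hom-Lie color algebra $(\mathfrak{g},[\cdot,\ldots,\cdot],\varepsilon,\alpha)$ is a $\Gamma$-graded vector space with an $n$-linear bracket of degree zero, a bicharacter $\varepsilon$ and a degree-zero linear map $\alpha$ such that for homogeneous elements: (i) $[x_1,\ldots,x_i,x_{i+1},\ldots,x_n]=-\varepsilon(x_i,x_{i+1})[x_1,\ldots,x_{i+1},x_i,\ldots,x_n]$; (ii) $[\alpha(x_1),\ldots,\alpha(x_{n-1}),[y_1,\ldots,y_n]]=\sum_{i=1}^n\varepsilon(x_1+\dots+x_{n-1},y_1+\dots+y_{i-1})[\alpha(y_1),\ldots,\alpha(y_{i-1}),[x_1,\ldots,x_{n-1},y_i],\alpha(y_{i+1}),\ldots,\alpha(y_n)]$.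 It is multiplicative if $\alpha([x_1,\ldots,x_n])=[\alpha(x_1),\ldots,\alpha(x_n)]$. *)

theory Defs
  imports Complex_Main
begin

definition bicharacter :: "('g::ab_group_add \<Rightarrow> 'g \<Rightarrow> 'k::field) \<Rightarrow> bool" where
  "bicharacter eps \<longleftrightarrow>
     (\<forall>a b. eps a b \<noteq> 0) \<and>
     (\<forall>a b. eps a b * eps b a = 1) \<and>
     (\<forall>a b c. eps a (b + c) = eps a b * eps a c) \<and>
     (\<forall>a b c. eps (a + b) c = eps a c * eps b c)"

definition graded_vector_space ::
  "('k::field \<Rightarrow> 'v::ab_group_add \<Rightarrow> 'v) \<Rightarrow> ('g \<Rightarrow> 'v set) \<Rightarrow> bool" where
  "graded_vector_space scale G \<longleftrightarrow>
     vector_space scale \<and>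
     (\<forall>a. 0 \<in> G a \<and> (\<forall>x\<in>G a. \<forall>y\<in>G a. x + y \<in> G a) \<and>
          (\<forall>c. \<forall>x\<in>G a. scale c x \<in> G a)) \<and>
     (\<forall>v. \<exists>!c. finite {a. c a \<noteq> 0} \<and> (\<forall>a. c a \<in> G a) \<and>
               v = (\<Sum>a\<in>{a. c a \<noteq> 0}. c a))"

text \<open>The n-ary bracket takes a list of
  n arguments (its value on lists of other lengths is irrelevant). Homogeneous elements
  are handled by quantifying over degree lists (xs ! i in G (ds ! i)).
  List positions are 0-based.\<close>
definition n_hom_lie_color ::
  "('k::field \<Rightarrow> 'v::ab_group_add \<Rightarrow> 'v) \<Rightarrow> ('g::ab_group_add \<Rightarrow> 'v set) \<Rightarrow> nat \<Rightarrow>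
   ('v list \<Rightarrow> 'v) \<Rightarrow> ('g \<Rightarrow> 'g \<Rightarrow> 'k) \<Rightarrow> ('v \<Rightarrow> 'v) \<Rightarrow> bool" where
  "n_hom_lie_color scale G n br eps alpha \<longleftrightarrow>
     graded_vector_space scale G \<and>
     bicharacter eps \<and>
     \<comment> \<open>n-linear bracket\<close>
     (\<forall>xs i. length xs = n \<longrightarrow> i < n \<longrightarrow>
        Vector_Spaces.linear scale scale (\<lambda>v. br (xs[i := v]))) \<and>
     \<comment> \<open>bracket of degree zero\<close>
     (\<forall>xs ds. length xs = n \<longrightarrow> length ds = n \<longrightarrow> (\<forall>i<n. xs ! i \<in> G (ds ! i)) \<longrightarrow>
        br xs \<in> G (sum_list ds)) \<and>
     \<comment> \<open>alpha linear of degree zero\<close>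
     Vector_Spaces.linear scale scale alpha \<and>
     (\<forall>a x. x \<in> G a \<longrightarrow> alpha x \<in> G a) \<and>
     \<comment> \<open>(i) epsilon-skew-symmetry\<close>
     (\<forall>xs ds i. length xs = n \<longrightarrow> length ds = n \<longrightarrow> (\<forall>j<n. xs ! j \<in> G (ds ! j)) \<longrightarrow>
        Suc i < n \<longrightarrow>
        br xs = - scale (eps (ds ! i) (ds ! Suc i))
                        (br (xs[i := xs ! Suc i, Suc i := xs ! i]))) \<and>
     \<comment> \<open>(ii) epsilon-Hom-Nambu identity\<close>
     (\<forall>xs ds ys es. length xs = n - 1 \<longrightarrow> length ds = n - 1 \<longrightarrow>
        length ys = n \<longrightarrow> length es = n \<longrightarrow>
        (\<forall>j<n - 1. xs ! j \<in> G (ds ! j)) \<longrightarrow> (\<forall>j<n. ys ! j \<in> G (es ! j)) \<longrightarrow>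
        br (map alpha xs @ [br ys]) =
          (\<Sum>i<n. scale (eps (sum_list ds) (sum_list (take i es)))
                     (br (map alpha (take i ys) @ [br (xs @ [ys ! i])] @
                          map alpha (drop (Suc i) ys)))))"

definition multiplicative ::
  "nat \<Rightarrow> ('v list \<Rightarrow> 'v) \<Rightarrow> ('v \<Rightarrow> 'v) \<Rightarrow> bool" where
  "multiplicative n br alpha \<longleftrightarrow>
     (\<forall>xs. length xs = n \<longrightarrow> alpha (br xs) = br (map alpha xs))"

end

theory Submission
  imports Defs
begin

lemma lin_pow:
  assumes "Vector_Spaces.linear s s f" and "vector_space s"
  shows "Vector_Spaces.linear s s (f ^^ m)"
proof (induction m)
  case 0
  then show ?case using vector_space.linear_ident[OF assms(2)] by simp
next
  case (Suc m)
  have "Vector_Spaces.linear s s (f \<circ> (f ^^ m))"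
    by (rule Vector_Spaces.linear_compose[OF Suc assms(1)])
  then show ?case by (simp add: comp_def)
qed

lemma deg_pow:
  assumes "\<forall>a x. x \<in> G a \<longrightarrow> f x \<in> G a" and "x \<in> G a"
  shows "(f ^^ m) x \<in> G a"
  by (induction m) (use assms in auto)

lemma mult_pow:
  assumes "multiplicative n br alpha" and "length xs = n"
  shows "(alpha ^^ m) (br xs) = br (map (alpha ^^ m) xs)"
proof (induction m)
  case 0
  then show ?case by simp
next
  case (Suc m)
  have "(alpha ^^ Suc m) (br xs) = alpha (br (map (alpha ^^ m) xs))" using Suc by simp
  also have "\<dots> = br (map alpha (map (alpha ^^ m) xs))"
    using assms unfolding multiplicative_def by simp
  finally show ?case by (simp add: comp_def)
qed

lemma lin_facts:
  assumes "Vector_Spaces.linear s s f"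
  shows "f (- x) = - f x" "f (s c x) = s c (f x)" "f (sum g S) = (\<Sum>a\<in>S. f (g a))"
  using assms unfolding linear_iff_module_hom
  by (auto simp: module_hom.neg module_hom.scale module_hom.sum)

theorem corollary3p4:
  fixes scale :: "'k::field_char_0 \<Rightarrow> 'v::ab_group_add \<Rightarrow> 'v"
    and G :: "'g::ab_group_add \<Rightarrow> 'v set"
    and n :: nat
    and br :: "'v list \<Rightarrow> 'v"
    and eps :: "'g \<Rightarrow> 'g \<Rightarrow> 'k"
    and alpha :: "'v \<Rightarrow> 'v"
  assumes "n_hom_lie_color scale G n br eps alpha"
    and "multiplicative n br alpha"
    and "p \<ge> (1::nat)"
  shows "n_hom_lie_color scale G n (\<lambda>xs. (alpha ^^ (2 * p - 1)) (br xs)) eps (alpha ^^ (2 * p))"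
proof -
  define A where "A = alpha ^^ (2 * p - 1)"
  have B: "alpha ^^ (2 * p) = alpha \<circ> A"
    unfolding A_def using assms(3)
    by (metis Suc_diff_1 funpow.simps(2) mult_pos_pos zero_less_numeral less_le_trans zero_less_one)
  note H = assms(1)[unfolded n_hom_lie_color_def]
  obtain gvs bic linbr degbr linal degal skew nambu where
    gvs: "graded_vector_space scale G" and bic: "bicharacter eps"
    and linbr: "\<forall>xs i. length xs = n \<longrightarrow> i < n \<longrightarrow>
        Vector_Spaces.linear scale scale (\<lambda>v. br (xs[i := v]))"
    and degbr: "\<forall>xs ds. length xs = n \<longrightarrow> length ds = n \<longrightarrow> (\<forall>i<n. xs ! i \<in> G (ds ! i)) \<longrightarrow>
        br xs \<in> G (sum_list ds)"
    and linal: "Vector_Spaces.linear scale scale alpha"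
    and degal: "\<forall>a x. x \<in> G a \<longrightarrow> alpha x \<in> G a"
    and skew: "\<forall>xs ds i. length xs = n \<longrightarrow> length ds = n \<longrightarrow> (\<forall>j<n. xs ! j \<in> G (ds ! j)) \<longrightarrow>
        Suc i < n \<longrightarrow>
        br xs = - scale (eps (ds ! i) (ds ! Suc i))
                        (br (xs[i := xs ! Suc i, Suc i := xs ! i]))"
    and nambu: "\<forall>xs ds ys es. length xs = n - 1 \<longrightarrow> length ds = n - 1 \<longrightarrow>
        length ys = n \<longrightarrow> length es = n \<longrightarrow>
        (\<forall>j<n - 1. xs ! j \<in> G (ds ! j)) \<longrightarrow> (\<forall>j<n. ys ! j \<in> G (es ! j)) \<longrightarrow>
        br (map alpha xs @ [br ys]) =
          (\<Sum>i<n. scale (eps (sum_list ds) (sum_list (take i es)))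
                     (br (map alpha (take i ys) @ [br (xs @ [ys ! i])] @
                          map alpha (drop (Suc i) ys))))"
    using H by (elim conjE) (rule that)
  have vs: "vector_space scale" using gvs unfolding graded_vector_space_def by blast
  have linA: "Vector_Spaces.linear scale scale A" unfolding A_def by (rule lin_pow[OF linal vs])
  have linB: "Vector_Spaces.linear scale scale (alpha ^^ (2*p))" by (rule lin_pow[OF linal vs])
  have degA: "x \<in> G a \<Longrightarrow> A x \<in> G a" for x a unfolding A_def by (rule deg_pow[OF degal])
  have degB: "\<forall>a x. x \<in> G a \<longrightarrow> (alpha ^^ (2*p)) x \<in> G a" using deg_pow[OF degal] by blast
  have multA: "length xs = n \<Longrightarrow> A (br xs) = br (map A xs)" for xs
    unfolding A_def by (rule mult_pow[OF assms(2)])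
  have c1: "\<forall>xs i. length xs = n \<longrightarrow> i < n \<longrightarrow>
        Vector_Spaces.linear scale scale (\<lambda>v. A (br (xs[i := v])))"
  proof (intro allI impI)
    fix xs :: "'v list" and i assume "length xs = n" "i < n"
    then have "Vector_Spaces.linear scale scale (\<lambda>v. br (xs[i := v]))" using linbr by blast
    from Vector_Spaces.linear_compose[OF this linA] show "Vector_Spaces.linear scale scale (\<lambda>v. A (br (xs[i := v])))"
      by (simp add: comp_def)
  qed
  have c2: "\<forall>xs ds. length xs = n \<longrightarrow> length ds = n \<longrightarrow> (\<forall>i<n. xs ! i \<in> G (ds ! i)) \<longrightarrow>
        A (br xs) \<in> G (sum_list ds)"
    using degbr degA by blast
  have c3: "\<forall>xs ds i. length xs = n \<longrightarrow> length ds = n \<longrightarrow> (\<forall>j<n. xs ! j \<in> G (ds ! j)) \<longrightarrow>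
        Suc i < n \<longrightarrow>
        A (br xs) = - scale (eps (ds ! i) (ds ! Suc i))
                        (A (br (xs[i := xs ! Suc i, Suc i := xs ! i])))"
  proof (intro allI impI)
    fix xs ds i assume a: "length xs = n" "length (ds::'g list) = n" "\<forall>j<n. xs ! j \<in> G (ds ! j)" "Suc i < n"
    then have "br xs = - scale (eps (ds ! i) (ds ! Suc i))
                        (br (xs[i := xs ! Suc i, Suc i := xs ! i]))" using skew a by blast
    then show "A (br xs) = - scale (eps (ds ! i) (ds ! Suc i))
                        (A (br (xs[i := xs ! Suc i, Suc i := xs ! i])))"
      by (simp add: lin_facts[OF linA])
  qed
  have c4: "\<forall>xs ds ys es. length xs = n - 1 \<longrightarrow> length ds = n - 1 \<longrightarrow>
        length ys = n \<longrightarrow> length es = n \<longrightarrow>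
        (\<forall>j<n - 1. xs ! j \<in> G (ds ! j)) \<longrightarrow> (\<forall>j<n. ys ! j \<in> G (es ! j)) \<longrightarrow>
        A (br (map (alpha ^^ (2*p)) xs @ [A (br ys)])) =
          (\<Sum>i<n. scale (eps (sum_list ds) (sum_list (take i es)))
                     (A (br (map (alpha ^^ (2*p)) (take i ys) @ [A (br (xs @ [ys ! i]))] @
                          map (alpha ^^ (2*p)) (drop (Suc i) ys)))))"
  proof (intro allI impI)
    fix xs ds ys es
    assume a: "length xs = n - 1" "length (ds::'g list) = n - 1" "length ys = n" "length (es::'g list) = n"
      "\<forall>j<n - 1. xs ! j \<in> G (ds ! j)" "\<forall>j<n. ys ! j \<in> G (es ! j)"
    define xs' where "xs' = map A xs"
    define ys' where "ys' = map A ys"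
    have a': "length xs' = n - 1" "length ys' = n"
      "\<forall>j<n - 1. xs' ! j \<in> G (ds ! j)" "\<forall>j<n. ys' ! j \<in> G (es ! j)"
      using a degA by (auto simp: xs'_def ys'_def)
    have id: "br (map alpha xs' @ [br ys']) =
          (\<Sum>i<n. scale (eps (sum_list ds) (sum_list (take i es)))
                     (br (map alpha (take i ys') @ [br (xs' @ [ys' ! i])] @
                          map alpha (drop (Suc i) ys'))))"
      using nambu a' a(2,4) by blast
    show "A (br (map (alpha ^^ (2*p)) xs @ [A (br ys)])) =
          (\<Sum>i<n. scale (eps (sum_list ds) (sum_list (take i es)))
                     (A (br (map (alpha ^^ (2*p)) (take i ys) @ [A (br (xs @ [ys ! i]))] @
                          map (alpha ^^ (2*p)) (drop (Suc i) ys)))))"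
    proof (cases "n = 0")
      case True
      then have "ys = []" using a by simp
      then have "A (br ys) = br ys" using multA True by simp
      moreover have "ys' = []" using \<open>ys = []\<close> by (simp add: ys'_def)
      moreover have "xs = []" "xs' = []" using a True by (auto simp: xs'_def)
      ultimately show ?thesis using id True \<open>ys = []\<close>
        by (simp add: lin_facts[OF linA] module_hom.zero[OF linA[unfolded linear_iff_module_hom]])
    next
      case False
      have inner: "A (br (xs @ [ys ! i])) = br (xs' @ [ys' ! i])" if "i < n" for i
        using multA[of "xs @ [ys ! i]"] a False that by (simp add: xs'_def ys'_def)
      have "A (br (map (alpha ^^ (2*p)) xs @ [A (br ys)])) = A (br (map alpha xs' @ [br ys']))"
        using multA[of ys] a by (simp add: B xs'_def ys'_def)
      also have "\<dots> = (\<Sum>i<n. scale (eps (sum_list ds) (sum_list (take i es)))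
                     (A (br (map alpha (take i ys') @ [br (xs' @ [ys' ! i])] @
                          map alpha (drop (Suc i) ys')))))"
        by (simp add: id lin_facts[OF linA])
      also have "\<dots> = (\<Sum>i<n. scale (eps (sum_list ds) (sum_list (take i es)))
                     (A (br (map (alpha ^^ (2*p)) (take i ys) @ [A (br (xs @ [ys ! i]))] @
                          map (alpha ^^ (2*p)) (drop (Suc i) ys)))))"
        by (rule sum.cong) (simp_all add: inner B ys'_def take_map drop_map)
      finally show ?thesis .
    qed
  qed
  show ?thesis
    unfolding n_hom_lie_color_def A_def[symmetric]
    by (intro conjI gvs bic c1 c2 c3 c4 linB degB)
qed

end
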